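(* Let $\mathcal{O}\subset\mathbb{R}^n$ be nonempty and open, and let $\varrho\colon\mathcal{O}\to(0,+\infty]$ be a lower semicontinuous function. Then $\mathcal{O}$ is the union of closed balls with radius function $\varrho(\cdot)$ if and only if for every $x\in\mathcal{O}$ there exists a unit vector $\zeta_x\in\mathbb{R}^n$ satisfying: (i) if $\varrho(x)<+\infty$, then there exists $t_x\in[0,\varrho(x)]$ such that $$\langle y-x+t_x\zeta_x,\; y-x+(t_x-2\varrho(x))\zeta_x\rangle>0\quad\text{for all } y\in\mathcal{O}^c;$$ (ii) if $\varrho(x)=+\infty$, then $\langle \zeta_x, y-x\rangle\le 0$ for all $y\in\mathcal{O}^c$.
   Context: $\mathcal{O}^c$ denotes the complement of $\mathcal{O}$ in $\mathbb{R}^n$, $\langle\cdot,\cdot\rangle$ the usual inner product, and $\bar B(z;\delta)$ the closed ball of center $z$ and radius $\delta$. For a nonempty open set $\mathcal{O}\subset\mathbb{R}^n$ and a lower semicontinuous $\varrho\colon\mathcal{O}\to(0,+\infty]$, $\mathcal{O}$ is said to be the union of closed balls with radius function $\varrho(\cdot)$ if for every $x\in\mathcal{O}$ there exists $y_x\in\mathcal{O}$ such that: $x\in\bar B(y_x;\varrho(x))\subset\mathcal{O}$ if $\varrho(x)<+\infty$; and $x\in\bar B(x+\delta(y_x-x);\delta)\subset\mathcal{O}$ for all $\delta>0$ if $\varrho(x)=+\infty$. *)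

theory Defs
  imports "HOL-Analysis.Analysis"
begin

definition lsc_on :: "'a::topological_space set \<Rightarrow> ('a \<Rightarrow> ereal) \<Rightarrow> bool" where
  "lsc_on U \<rho> \<longleftrightarrow> (\<forall>x\<in>U. \<forall>c. c < \<rho> x \<longrightarrow> (\<forall>\<^sub>F y in at x within U. c < \<rho> y))"

definition union_closed_balls :: "'a::euclidean_space set \<Rightarrow> ('a \<Rightarrow> ereal) \<Rightarrow> bool" where
  "union_closed_balls U \<rho> \<longleftrightarrow>
    (\<forall>x\<in>U. \<exists>y\<in>U.
       (\<rho> x < \<infinity> \<longrightarrow> x \<in> cball y (real_of_ereal (\<rho> x)) \<and> cball y (real_of_ereal (\<rho> x)) \<subseteq> U) \<and>
       (\<rho> x = \<infinity> \<longrightarrow> (\<forall>\<delta>>0. x \<in> cball (x + \<delta> *\<^sub>R (y - x)) \<delta> \<and> cball (x + \<delta> *\<^sub>R (y - x)) \<delta> \<subseteq> U)))"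

end

theory Submission
  imports Defs
begin

lemma key_inner:
  fixes w z :: "'a::real_inner"
  assumes "norm z = 1"
  shows "inner (w + t *\<^sub>R z) (w + (t - 2*r) *\<^sub>R z) = (norm (w + (t - r) *\<^sub>R z))^2 - r^2"
proof -
  have zz: "inner z z = 1" using assms by (metis norm_eq_sqrt_inner real_sqrt_eq_1_iff)
  show ?thesis
    unfolding power2_norm_eq_inner
    by (simp add: inner_add_left inner_add_right zz inner_commute algebra_simps power2_eq_square)
qed

lemma unit_exists: "\<exists>b::'a::euclidean_space. norm b = 1"
  using nonempty_Basis norm_Basis by blast

lemma fin_case:
  fixes U :: "'a::euclidean_space set" and r :: real
  shows "(\<exists>y\<in>U. x \<in> cball y r \<and> cball y r \<subseteq> U) \<longleftrightarrow>
    (\<exists>\<zeta>::'a. norm \<zeta> = 1 \<and> (\<exists>t. 0 \<le> t \<and> t \<le> r \<and>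
       (\<forall>y. y \<notin> U \<longrightarrow> inner (y - x + t *\<^sub>R \<zeta>) (y - x + (t - 2 * r) *\<^sub>R \<zeta>) > 0)))"
proof
  assume "\<exists>y\<in>U. x \<in> cball y r \<and> cball y r \<subseteq> U"
  then obtain y where y: "y \<in> U" "x \<in> cball y r" "cball y r \<subseteq> U" by blast
  obtain b :: 'a where b: "norm b = 1" using unit_exists by blast
  define d where "d = norm (y - x)"
  define \<zeta> where "\<zeta> = (if y = x then b else (1/d) *\<^sub>R (y - x))"
  have dpos: "y \<noteq> x \<Longrightarrow> d > 0" using d_def by simp
  have nz: "norm \<zeta> = 1" using b dpos by (auto simp: \<zeta>_def d_def)
  have yc: "y = x + d *\<^sub>R \<zeta>" using dpos by (auto simp: \<zeta>_def d_def)
  have dr: "d \<le> r" using y(2) by (simp add: d_def dist_norm norm_minus_commute)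
  show "\<exists>\<zeta>::'a. norm \<zeta> = 1 \<and> (\<exists>t. 0 \<le> t \<and> t \<le> r \<and>
       (\<forall>y. y \<notin> U \<longrightarrow> inner (y - x + t *\<^sub>R \<zeta>) (y - x + (t - 2 * r) *\<^sub>R \<zeta>) > 0))"
  proof (intro exI conjI allI impI)
    show "norm \<zeta> = 1" by fact
    show "0 \<le> r - d" using dr by simp
    show "r - d \<le> r" using d_def by simp
    fix y' assume "y' \<notin> U"
    then have "y' \<notin> cball y r" using y(3) by blast
    then have gt: "norm (y' - y) > r" by (simp add: dist_norm norm_minus_commute)
    have eq: "y' - x + (r - d - r) *\<^sub>R \<zeta> = y' - y" using yc by (simp add: algebra_simps)
    have "r\<^sup>2 < (norm (y' - y))^2"
    proof (cases "r \<ge> 0")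
      case True then show ?thesis using gt by (simp add: power_strict_mono)
    next
      case False then show ?thesis using dr d_def by (smt (verit) norm_ge_zero)
    qed
    then show "inner (y' - x + (r - d) *\<^sub>R \<zeta>) (y' - x + (r - d - 2 * r) *\<^sub>R \<zeta>) > 0"
      using key_inner[OF nz, of "y' - x" "r - d" r] unfolding eq by simp
  qed
next
  assume "\<exists>\<zeta>::'a. norm \<zeta> = 1 \<and> (\<exists>t. 0 \<le> t \<and> t \<le> r \<and>
       (\<forall>y. y \<notin> U \<longrightarrow> inner (y - x + t *\<^sub>R \<zeta>) (y - x + (t - 2 * r) *\<^sub>R \<zeta>) > 0))"
  then obtain \<zeta> :: 'a and t where z: "norm \<zeta> = 1" "0 \<le> t" "t \<le> r"
    and H: "\<And>y. y \<notin> U \<Longrightarrow> inner (y - x + t *\<^sub>R \<zeta>) (y - x + (t - 2 * r) *\<^sub>R \<zeta>) > 0" by blast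
  define c where "c = x + (r - t) *\<^sub>R \<zeta>"
  have sub: "cball c r \<subseteq> U"
  proof
    fix z assume zc: "z \<in> cball c r"
    show "z \<in> U"
    proof (rule ccontr)
      assume "z \<notin> U"
      from H[OF this] have "(norm (z - x + (t - r) *\<^sub>R \<zeta>))^2 - r^2 > 0"
        using key_inner[OF z(1), of "z - x" t r] by simp
      moreover have "z - x + (t - r) *\<^sub>R \<zeta> = z - c" by (simp add: c_def algebra_simps)
      moreover have "norm (z - c) \<le> r" using zc by (simp add: dist_norm norm_minus_commute)
      ultimately show False using z
        by (smt (verit) norm_ge_zero power_mono)
    qed
  qed
  have "x \<in> cball c r" using z by (simp add: c_def dist_norm)
  moreover have "c \<in> U" using sub z by auto
  ultimately show "\<exists>y\<in>U. x \<in> cball y r \<and> cball y r \<subseteq> U" using sub by blast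
qed


lemma sq_expand:
  fixes w v :: "'a::real_inner"
  shows "(norm (w - d *\<^sub>R v))^2 = (norm w)^2 - 2*d*inner v w + d^2 * (norm v)^2"
  unfolding power2_norm_eq_inner
  by (simp add: inner_diff_left inner_diff_right inner_commute algebra_simps power2_eq_square)

lemma inf_case:
  fixes U :: "'a::euclidean_space set"
  assumes xU: "x \<in> U"
  shows "(\<exists>y\<in>U. \<forall>\<delta>>0. x \<in> cball (x + \<delta> *\<^sub>R (y - x)) \<delta> \<and> cball (x + \<delta> *\<^sub>R (y - x)) \<delta> \<subseteq> U)
    \<longleftrightarrow> (\<exists>\<zeta>::'a. norm \<zeta> = 1 \<and> (\<forall>y. y \<notin> U \<longrightarrow> inner \<zeta> (y - x) \<le> 0))"
proof
  assume "\<exists>y\<in>U. \<forall>\<delta>>0. x \<in> cball (x + \<delta> *\<^sub>R (y - x)) \<delta> \<and> cball (x + \<delta> *\<^sub>R (y - x)) \<delta> \<subseteq> U"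
  then obtain y where H: "\<And>\<delta>. \<delta> > 0 \<Longrightarrow> x \<in> cball (x + \<delta> *\<^sub>R (y - x)) \<delta> \<and> cball (x + \<delta> *\<^sub>R (y - x)) \<delta> \<subseteq> U"
    by blast
  define v where "v = y - x"
  have nv: "norm v \<le> 1" using H[of 1] by (simp add: v_def dist_norm)
  have inn: "inner v (y' - x) \<le> 0" if "y' \<notin> U" for y'
  proof (rule ccontr)
    define w where "w = y' - x"
    assume "\<not> inner v (y' - x) \<le> 0"
    then have p: "inner v w > 0" by (simp add: w_def)
    define \<delta> where "\<delta> = (norm w)^2 / (2 * inner v w)"
    have wne: "w \<noteq> 0" using that xU by (auto simp: w_def)
    have dp: "\<delta> > 0" using p wne by (simp add: \<delta>_def)
    have e: "2 * \<delta> * inner v w = (norm w)^2" using p by (simp add: \<delta>_def)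
    have "\<delta>^2 * (norm v)^2 \<le> \<delta>^2" using nv
      by (simp add: mult_left_le power_le_one)
    then have "(norm (w - \<delta> *\<^sub>R v))^2 \<le> \<delta>^2" using sq_expand[of w \<delta> v] e by linarith
    then have "norm (w - \<delta> *\<^sub>R v) \<le> \<delta>" using dp by (simp add: power2_le_iff_abs_le)
    then have "y' \<in> cball (x + \<delta> *\<^sub>R v) \<delta>"
      by (simp add: dist_norm w_def norm_minus_commute algebra_simps)
    then show False using H[OF dp] that by (auto simp: v_def)
  qed
  show "\<exists>\<zeta>::'a. norm \<zeta> = 1 \<and> (\<forall>y. y \<notin> U \<longrightarrow> inner \<zeta> (y - x) \<le> 0)"
  proof (cases "v = 0")
    case True
    have "y' \<in> U" for y'
    proof (cases "y' = x")
      case True then show ?thesis using xU by simp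
    next
      case False
      then have "dist x y' > 0" by simp
      from H[OF this] show ?thesis using \<open>v = 0\<close> by (auto simp: v_def)
    qed
    then show ?thesis using unit_exists by blast
  next
    case False
    show ?thesis
    proof (intro exI conjI allI impI)
      show "norm ((1 / norm v) *\<^sub>R v) = 1" using False by simp
      fix y' assume "y' \<notin> U"
      then show "inner ((1 / norm v) *\<^sub>R v) (y' - x) \<le> 0"
        using inn[of y'] by (simp add: divide_nonpos_pos False)
    qed
  qed
next
  assume "\<exists>\<zeta>::'a. norm \<zeta> = 1 \<and> (\<forall>y. y \<notin> U \<longrightarrow> inner \<zeta> (y - x) \<le> 0)"
  then obtain \<zeta> :: 'a where z: "norm \<zeta> = 1" and H: "\<And>y. y \<notin> U \<Longrightarrow> inner \<zeta> (y - x) \<le> 0"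
    by blast
  have sub: "cball (x + \<delta> *\<^sub>R \<zeta>) \<delta> \<subseteq> U" if dp: "\<delta> > 0" for \<delta>
  proof
    fix z assume zc: "z \<in> cball (x + \<delta> *\<^sub>R \<zeta>) \<delta>"
    show "z \<in> U"
    proof (rule ccontr)
      assume "z \<notin> U"
      then have i: "inner \<zeta> (z - x) \<le> 0" by (rule H)
      have "norm ((z - x) - \<delta> *\<^sub>R \<zeta>) \<le> \<delta>" using zc
        by (simp add: dist_norm norm_minus_commute algebra_simps)
      then have "(norm ((z - x) - \<delta> *\<^sub>R \<zeta>))^2 \<le> \<delta>^2"
        by (simp add: power_mono)
      then have "(norm (z - x))^2 \<le> 2 * \<delta> * inner \<zeta> (z - x)"
        using sq_expand[of "z - x" \<delta> \<zeta>] z by simp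
      moreover have "2 * \<delta> * inner \<zeta> (z - x) \<le> 0" using i dp
        by (simp add: mult_nonneg_nonpos)
      ultimately have "(norm (z - x))^2 \<le> 0" by linarith
      then have "z = x" by simp
      then show False using xU \<open>z \<notin> U\<close> by simp
    qed
  qed
  have "x + \<zeta> \<in> U" using sub[of 1] by auto
  moreover have "\<forall>\<delta>>0. x \<in> cball (x + \<delta> *\<^sub>R ((x + \<zeta>) - x)) \<delta> \<and> cball (x + \<delta> *\<^sub>R ((x + \<zeta>) - x)) \<delta> \<subseteq> U"
    using sub z by (simp add: dist_norm)
  ultimately show "\<exists>y\<in>U. \<forall>\<delta>>0. x \<in> cball (x + \<delta> *\<^sub>R (y - x)) \<delta> \<and> cball (x + \<delta> *\<^sub>R (y - x)) \<delta> \<subseteq> U"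
    by blast
qed


theorem proposition1:
  fixes U :: "'a::euclidean_space set" and \<rho> :: "'a \<Rightarrow> ereal"
  assumes "open U" and "U \<noteq> {}"
    and "\<forall>x\<in>U. \<rho> x > 0"
    and "lsc_on U \<rho>"
  shows "union_closed_balls U \<rho> \<longleftrightarrow>
    (\<forall>x\<in>U. \<exists>\<zeta>::'a. norm \<zeta> = 1 \<and>
       (\<rho> x < \<infinity> \<longrightarrow>
          (\<exists>t. 0 \<le> t \<and> t \<le> real_of_ereal (\<rho> x) \<and>
             (\<forall>y. y \<notin> U \<longrightarrow>
                inner (y - x + t *\<^sub>R \<zeta>) (y - x + (t - 2 * real_of_ereal (\<rho> x)) *\<^sub>R \<zeta>) > 0))) \<and>
       (\<rho> x = \<infinity> \<longrightarrow> (\<forall>y. y \<notin> U \<longrightarrow> inner \<zeta> (y - x) \<le> 0)))"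
  unfolding union_closed_balls_def
proof (intro ball_cong refl)
  fix x assume xU: "x \<in> U"
  show "(\<exists>y\<in>U. (\<rho> x < \<infinity> \<longrightarrow> x \<in> cball y (real_of_ereal (\<rho> x)) \<and> cball y (real_of_ereal (\<rho> x)) \<subseteq> U) \<and>
       (\<rho> x = \<infinity> \<longrightarrow> (\<forall>\<delta>>0. x \<in> cball (x + \<delta> *\<^sub>R (y - x)) \<delta> \<and> cball (x + \<delta> *\<^sub>R (y - x)) \<delta> \<subseteq> U))) =
    (\<exists>\<zeta>::'a. norm \<zeta> = 1 \<and>
       (\<rho> x < \<infinity> \<longrightarrow>
          (\<exists>t. 0 \<le> t \<and> t \<le> real_of_ereal (\<rho> x) \<and>
             (\<forall>y. y \<notin> U \<longrightarrow>
                inner (y - x + t *\<^sub>R \<zeta>) (y - x + (t - 2 * real_of_ereal (\<rho> x)) *\<^sub>R \<zeta>) > 0))) \<and>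
       (\<rho> x = \<infinity> \<longrightarrow> (\<forall>y. y \<notin> U \<longrightarrow> inner \<zeta> (y - x) \<le> 0)))"
  proof (cases "\<rho> x = \<infinity>")
    case True
    then show ?thesis using inf_case[OF xU] by simp
  next
    case False
    then have "\<rho> x < \<infinity>" by (simp add: less_le)
    then show ?thesis using fin_case[of U x "real_of_ereal (\<rho> x)"] False by simp
  qed
qed

end
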